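(* Let $P$ be an orthogonal polygon without holes and let $S$ be a maximal square of $P$ with side length $d$ such that: the top and bottom sides of $S$ overlap with horizontal edges $e_1$ and $e_2$ of $P$ respectively; $e_1$ contains the top-right corner of $S$; $e_2$ contains the bottom-right corner of $S$; and there is a strip $Y$ between $e_1$ and $e_2$ whose right side is at distance more than $d$ from the right side of $S$. Let $S'$ be the reflection of $S$ in its right side. Then for every partial solution $\mathcal{R}$ with $S\in\mathcal{R}$ and such that no rec-pack of $\mathcal{R}$ overlaps $S'$, the set $\mathcal{R}\cup\{S'\}$ is also a partial solution.
   Context: $P$ is a simple polygon with integer vertex coordinates and axis-parallel edges. A valid square is an axis-parallel square contained in $P$; it is maximal if no larger-area valid square contains it. A strip of $P$ is a maximal axis-parallel non-square rectangular region lying inside $P$ such that each of its two longer sides is completely contained in an edge of $P$. A rec-pack is an axis-parallel rectangle contained in $P$ of dimensions $t\times \eta t$ or $\eta t\times t$ with $\eta\in\mathbb{N}$ (every valid square is a rec-pack); its extraction $\mathsf{ext}(R)$ is the set of the $\eta$ side-$t$ squares tiling $R$. A set $\mathcal{R}'$ of rec-packs is a minimum covering of $P$ if $\bigcup_{R\in\mathcal{R}'}\mathsf{ext}(R)$ is a minimum-cardinality set of valid squares with union $P$ and distinct rec-packs have disjoint extractions. A partial solution is a set of rec-packs contained in some minimum covering. *)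

theory Defs
  imports "HOL-Analysis.Analysis"
begin

type_synonym point = "real \<times> real"

definition ipt :: "int \<times> int \<Rightarrow> point" where
  "ipt v = (real_of_int (fst v), real_of_int (snd v))"

fun poly_path :: "point list \<Rightarrow> real \<Rightarrow> point" where
  "poly_path [] = linepath 0 0"
| "poly_path [a] = linepath a a"
| "poly_path [a, b] = linepath a b"
| "poly_path (a # b # c # xs) = linepath a b +++ poly_path (b # c # xs)"

definition boundary_path :: "(int \<times> int) list \<Rightarrow> real \<Rightarrow> point" where
  "boundary_path vs = poly_path (map ipt vs @ [ipt (hd vs)])"

definition nxt :: "(int \<times> int) list \<Rightarrow> nat \<Rightarrow> int \<times> int" where
  "nxt vs i = vs ! (Suc i mod length vs)"

definition horiz_pair :: "int \<times> int \<Rightarrow> int \<times> int \<Rightarrow> bool" where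
  "horiz_pair p q \<longleftrightarrow> snd p = snd q"

text \<open>Orthogonal simple polygon: consecutive vertices are distinct and joined by
  axis-parallel edges that alternate horizontal/vertical (so each edge is a maximal
  straight piece of the boundary), and the boundary is a simple closed curve.\<close>
definition ortho_polygon :: "(int \<times> int) list \<Rightarrow> bool" where
  "ortho_polygon vs \<longleftrightarrow> length vs \<ge> 4 \<and>
     (\<forall>i < length vs. vs ! i \<noteq> nxt vs i \<and>
        (fst (vs ! i) = fst (nxt vs i) \<or> snd (vs ! i) = snd (nxt vs i)) \<and>
        (horiz_pair (vs ! i) (nxt vs i) \<longleftrightarrow>
           \<not> horiz_pair (nxt vs i) (nxt vs (Suc i mod length vs)))) \<and>
     simple_path (boundary_path vs)"

definition polygon_region :: "(int \<times> int) list \<Rightarrow> point set" where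
  "polygon_region vs = path_image (boundary_path vs) \<union> inside (path_image (boundary_path vs))"

definition poly_edges :: "(int \<times> int) list \<Rightarrow> point set set" where
  "poly_edges vs = {closed_segment (ipt (vs ! i)) (ipt (nxt vs i)) | i. i < length vs}"

definition horizontal :: "point set \<Rightarrow> bool" where
  "horizontal e \<longleftrightarrow> (\<exists>c. \<forall>p\<in>e. snd p = c)"

definition rect :: "real \<Rightarrow> real \<Rightarrow> real \<Rightarrow> real \<Rightarrow> point set" where
  "rect x y w h = {x..x+w} \<times> {y..y+h}"

definition top_side :: "real \<Rightarrow> real \<Rightarrow> real \<Rightarrow> real \<Rightarrow> point set" where
  "top_side x y w h = {x..x+w} \<times> {y+h}"

definition bottom_side :: "real \<Rightarrow> real \<Rightarrow> real \<Rightarrow> real \<Rightarrow> point set" where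
  "bottom_side x y w h = {x..x+w} \<times> {y}"

definition left_side :: "real \<Rightarrow> real \<Rightarrow> real \<Rightarrow> real \<Rightarrow> point set" where
  "left_side x y w h = {x} \<times> {y..y+h}"

definition right_side :: "real \<Rightarrow> real \<Rightarrow> real \<Rightarrow> real \<Rightarrow> point set" where
  "right_side x y w h = {x+w} \<times> {y..y+h}"

definition is_square :: "point set \<Rightarrow> bool" where
  "is_square Q \<longleftrightarrow> (\<exists>x y t. t > 0 \<and> Q = rect x y t t)"

definition valid_square :: "point set \<Rightarrow> point set \<Rightarrow> bool" where
  "valid_square P Q \<longleftrightarrow> is_square Q \<and> Q \<subseteq> P"

definition maximal_square :: "point set \<Rightarrow> point set \<Rightarrow> bool" where
  "maximal_square P S \<longleftrightarrow> valid_square P S \<and>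
     (\<forall>x y t x' y' t'. S = rect x y t t \<and> t > 0 \<and> t' > 0 \<and>
        valid_square P (rect x' y' t' t') \<and> S \<subseteq> rect x' y' t' t' \<longrightarrow> t' * t' \<le> t * t)"

definition rec_pack :: "point set \<Rightarrow> point set \<Rightarrow> bool" where
  "rec_pack P R \<longleftrightarrow> R \<subseteq> P \<and>
     (\<exists>x y t (\<eta>::nat). t > 0 \<and> \<eta> \<ge> 1 \<and>
        (R = rect x y t (real \<eta> * t) \<or> R = rect x y (real \<eta> * t) t))"

definition ext :: "point set \<Rightarrow> point set set" where
  "ext R = {Q. \<exists>x y t (\<eta>::nat) i. t > 0 \<and> \<eta> \<ge> 1 \<and> i < \<eta> \<and>
       ((R = rect x y t (real \<eta> * t) \<and> Q = rect x (y + real i * t) t t) \<or>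
        (R = rect x y (real \<eta> * t) t \<and> Q = rect (x + real i * t) y t t))}"

definition strip_cand :: "(int \<times> int) list \<Rightarrow> point set \<Rightarrow> bool" where
  "strip_cand vs Y \<longleftrightarrow> Y \<subseteq> polygon_region vs \<and>
     (\<exists>x y w h. w > 0 \<and> h > 0 \<and> Y = rect x y w h \<and>
        ((w > h \<and> (\<exists>e\<in>poly_edges vs. top_side x y w h \<subseteq> e) \<and>
                  (\<exists>e\<in>poly_edges vs. bottom_side x y w h \<subseteq> e)) \<or>
         (h > w \<and> (\<exists>e\<in>poly_edges vs. left_side x y w h \<subseteq> e) \<and>
                  (\<exists>e\<in>poly_edges vs. right_side x y w h \<subseteq> e))))"

definition strip :: "(int \<times> int) list \<Rightarrow> point set \<Rightarrow> bool" where
  "strip vs Y \<longleftrightarrow> strip_cand vs Y \<and> (\<forall>Z. strip_cand vs Z \<and> Y \<subseteq> Z \<longrightarrow> Z = Y)"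

definition square_cover :: "point set \<Rightarrow> point set set \<Rightarrow> bool" where
  "square_cover P U \<longleftrightarrow> finite U \<and> (\<forall>Q\<in>U. valid_square P Q) \<and> \<Union>U = P"

definition min_square_cover :: "point set \<Rightarrow> point set set \<Rightarrow> bool" where
  "min_square_cover P U \<longleftrightarrow> square_cover P U \<and> (\<forall>V. square_cover P V \<longrightarrow> card U \<le> card V)"

definition minimum_covering :: "point set \<Rightarrow> point set set \<Rightarrow> bool" where
  "minimum_covering P RR \<longleftrightarrow> (\<forall>R\<in>RR. rec_pack P R) \<and>
     min_square_cover P (\<Union>R\<in>RR. ext R) \<and>
     (\<forall>R1\<in>RR. \<forall>R2\<in>RR. R1 \<noteq> R2 \<longrightarrow> ext R1 \<inter> ext R2 = {})"

definition partial_solution :: "point set \<Rightarrow> point set set \<Rightarrow> bool" where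
  "partial_solution P RR \<longleftrightarrow> (\<exists>RR'. minimum_covering P RR' \<and> RR \<subseteq> RR')"

definition overlaps :: "point set \<Rightarrow> point set \<Rightarrow> bool" where
  "overlaps A B \<longleftrightarrow> interior A \<inter> interior B \<noteq> {}"

end

theory Submission
  imports Defs
begin


lemma rect_eq:
  assumes "rect x y w h = rect x' y' w' h'" "w \<ge> 0" "h \<ge> 0"
  shows "x = x' \<and> y = y' \<and> w = w' \<and> h = h'"
proof -
  have ne: "rect x y w h \<noteq> {}" using assms(2,3) unfolding rect_def by auto
  have ne': "{x'..x'+w'} \<noteq> {}" "{y'..y'+h'} \<noteq> {}" using ne assms(1) unfolding rect_def by auto
  have "fst ` rect x y w h = {x..x+w}" "snd ` rect x y w h = {y..y+h}"
    using assms(2,3) unfolding rect_def by auto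
  moreover have "fst ` rect x' y' w' h' = {x'..x'+w'}" "snd ` rect x' y' w' h' = {y'..y'+h'}"
    using ne' unfolding rect_def by (simp_all add: fst_image_times snd_image_times)
  ultimately have "{x..x+w} = {x'..x'+w'}" "{y..y+h} = {y'..y'+h'}" using assms(1) by metis+
  then show ?thesis using assms(2,3) by (auto simp: Icc_eq_Icc)
qed

lemma ext_sub: "Q \<in> ext R \<Longrightarrow> Q \<subseteq> R"
proof -
  assume "Q \<in> ext R"
  then obtain x y t and \<eta>::nat and i where h: "t > 0" "\<eta> \<ge> 1" "i < \<eta>"
    "(R = rect x y t (real \<eta> * t) \<and> Q = rect x (y + real i * t) t t) \<or>
     (R = rect x y (real \<eta> * t) t \<and> Q = rect (x + real i * t) y t t)"
    unfolding ext_def by blast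
  have "real i + 1 \<le> real \<eta>" using h(3) by linarith
  then have "real i * t + t \<le> real \<eta> * t" using h(1)
    by (metis distrib_right mult_1 mult_right_mono less_le)
  moreover have "0 \<le> real i * t" using h(1) by simp
  ultimately show ?thesis using h(4) unfolding rect_def by auto
qed

lemma ext_square: assumes "t > 0" shows "ext (rect a b t t) = {rect a b t t}"
proof
  show "{rect a b t t} \<subseteq> ext (rect a b t t)"
  proof -
    have "rect a b t t = rect a b t (real (1::nat) * t) \<and> rect a b t t = rect a (b + real (0::nat) * t) t t" by simp
    then have "rect a b t t \<in> ext (rect a b t t)" unfolding ext_def using assms
      by (smt (verit) mem_Collect_eq less_one order_refl)
    then show ?thesis by simp
  qed
next
  show "ext (rect a b t t) \<subseteq> {rect a b t t}"
  proof
    fix Q assume "Q \<in> ext (rect a b t t)"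
    then obtain x y t' and \<eta>::nat and i where h: "t' > 0" "\<eta> \<ge> 1" "i < \<eta>"
      "(rect a b t t = rect x y t' (real \<eta> * t') \<and> Q = rect x (y + real i * t') t' t') \<or>
       (rect a b t t = rect x y (real \<eta> * t') t' \<and> Q = rect (x + real i * t') y t' t')"
      unfolding ext_def by blast
    from h(4) show "Q \<in> {rect a b t t}"
    proof
      assume H: "rect a b t t = rect x y t' (real \<eta> * t') \<and> Q = rect x (y + real i * t') t' t'"
      have E: "rect a b t t = rect x y t' (real \<eta> * t')" using H by simp
      have "a = x \<and> b = y \<and> t = t' \<and> t = real \<eta> * t'" using rect_eq[OF E] assms by auto
      then have "real \<eta> = 1" using h(1) by (metis mult_cancel_right2 order_less_irrefl)
      then have "\<eta> = 1" by simp
      then have "i = 0" using h(3) by auto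
      then show ?thesis using H \<open>a = x \<and> b = y \<and> t = t' \<and> t = real \<eta> * t'\<close> by auto
    next
      assume H: "rect a b t t = rect x y (real \<eta> * t') t' \<and> Q = rect (x + real i * t') y t' t'"
      have E: "rect a b t t = rect x y (real \<eta> * t') t'" using H by simp
      have "a = x \<and> b = y \<and> t = t' \<and> t = real \<eta> * t'" using rect_eq[OF E] assms by auto
      then have "real \<eta> = 1" using h(1) by (metis mult_cancel_right2 order_less_irrefl)
      then have "\<eta> = 1" by simp
      then have "i = 0" using h(3) by auto
      then show ?thesis using H \<open>a = x \<and> b = y \<and> t = t' \<and> t = real \<eta> * t'\<close> by auto
    qed
  qed
qed

lemma square_rec_pack: "t > 0 \<Longrightarrow> rect a b t t \<subseteq> P \<Longrightarrow> rec_pack P (rect a b t t)"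
proof -
  assume "t > 0" "rect a b t t \<subseteq> P"
  moreover have "rect a b t t = rect a b t (real (1::nat) * t)" by simp
  ultimately show ?thesis unfolding rec_pack_def by (metis order_refl)
qed

lemma ext_is_square: "Q \<in> ext R \<Longrightarrow> \<exists>a b t. t > 0 \<and> Q = rect a b t t"
  unfolding ext_def by blast

lemma interior_rect: "interior (rect a b w h) = {a<..<a+w} \<times> {b<..<b+h}"
  unfolding rect_def by (simp add: interior_Times)

lemma poly_path_ends: "xs \<noteq> [] \<Longrightarrow> pathstart (poly_path xs) = hd xs \<and> pathfinish (poly_path xs) = last xs"
  by (induction xs rule: poly_path.induct) auto

lemma poly_path_seg: "Suc i < length L \<Longrightarrow> closed_segment (L!i) (L!Suc i) \<subseteq> path_image (poly_path L)"
proof (induction L arbitrary: i rule: poly_path.induct)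
  case (4 a b c xs)
  have pi: "path_image (poly_path (a # b # c # xs)) = closed_segment a b \<union> path_image (poly_path (b # c # xs))"
    using poly_path_ends[of "b # c # xs"] by (simp add: path_image_join)
  show ?case
  proof (cases i)
    case 0 then show ?thesis using pi by auto
  next
    case (Suc j) then show ?thesis using pi "4.IH"[of j] "4.prems" by auto
  qed
qed auto

lemma edge_sub_path: assumes "e \<in> poly_edges vs" shows "e \<subseteq> path_image (boundary_path vs)"
proof -
  obtain i where i: "i < length vs" "e = closed_segment (ipt (vs ! i)) (ipt (nxt vs i))"
    using assms unfolding poly_edges_def by blast
  define L where "L = map ipt vs @ [ipt (hd vs)]"
  have "L ! i = ipt (vs ! i)" using i(1) unfolding L_def by (simp add: nth_append)
  moreover have "L ! Suc i = ipt (nxt vs i)"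
  proof (cases "Suc i < length vs")
    case True then show ?thesis unfolding L_def nxt_def by (simp add: nth_append)
  next
    case False then have "Suc i = length vs" using i(1) by auto
    moreover have "hd vs = vs ! 0" using i(1) by (cases vs) auto
    ultimately show ?thesis unfolding L_def nxt_def using i(1) by (simp add: nth_append)
  qed
  moreover have "Suc i < length L" using i(1) unfolding L_def by simp
  ultimately show ?thesis using poly_path_seg[of i L] i(2) unfolding boundary_path_def L_def by simp
qed

lemma boundary_closed: "vs \<noteq> [] \<Longrightarrow> pathfinish (boundary_path vs) = pathstart (boundary_path vs)"
  unfolding boundary_path_def using poly_path_ends[of "map ipt vs @ [ipt (hd vs)]"]
  by (simp add: hd_map)

lemma path_not_interior:
  assumes poly: "ortho_polygon vs" and p: "p \<in> path_image (boundary_path vs)"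
  shows "p \<notin> interior (polygon_region vs)"
proof
  assume pint: "p \<in> interior (polygon_region vs)"
  let ?g = "boundary_path vs"
  let ?C = "path_image ?g"
  have sp: "simple_path ?g" using poly unfolding ortho_polygon_def by auto
  have ne: "vs \<noteq> []" using poly unfolding ortho_polygon_def by auto
  have cl: "pathfinish ?g = pathstart ?g" using boundary_closed[OF ne] .
  have h1: "?C homeomorphic sphere (0::complex) 1"
    using homeomorphic_simple_path_image_circle[OF sp cl, of 1 0] by simp
  have h2: "sphere (0::complex) 1 homeomorphic sphere (0::real\<times>real) 1"
    by (rule homeomorphic_spheres') (auto simp: DIM_complex)
  have hom: "?C homeomorphic sphere (0::real\<times>real) 1" using homeomorphic_trans[OF h1 h2] .
  have bnd: "bounded ?C" using sp by (simp add: bounded_simple_path_image)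
  obtain z where z: "z \<in> outside ?C" using outside_bounded_nonempty[OF bnd] by blast
  define T where "T = connected_component_set (- ?C) z"
  have zC: "z \<in> - ?C" using z outside_no_overlap by blast
  have Tc: "T \<in> components (- ?C)" unfolding T_def components_def using zC by blast
  have fT: "frontier T = ?C" using Jordan_Brouwer_frontier[OF hom Tc] by simp
  have Tout: "T \<subseteq> outside ?C" unfolding T_def using z outside_same_component by blast
  obtain e where e: "e > 0" "ball p e \<subseteq> polygon_region vs" using pint by (meson open_contains_ball_eq open_interior interior_subset subset_trans)
  have "p \<in> closure T" using p fT frontier_def by auto
  then obtain t where t: "t \<in> T" "dist t p < e" using e(1) closure_approachable by blast
  then have "t \<in> polygon_region vs" using e(2) by (auto simp: dist_commute)
  moreover have "t \<in> outside ?C" using t Tout by auto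
  ultimately show False unfolding polygon_region_def
    using inside_Int_outside outside_no_overlap by blast
qed



lemma seg_horiz:
  fixes p q u c :: real
  assumes "convex e" "(p, c) \<in> e" "(q, c) \<in> e" "p \<le> u" "u \<le> q"
  shows "(u, c) \<in> e"
proof (cases "p = q")
  case True then have "u = q" using assms by auto
  then show ?thesis using assms by simp
next
  case False
  then have pq: "p < q" using assms by auto
  define th where "th = (u - p) / (q - p)"
  have th: "0 \<le> th" "th \<le> 1" using assms pq unfolding th_def by (auto simp: field_simps)
  have "th * (q - p) = u - p" using pq unfolding th_def by simp
  then have "th * q - th * p = u - p" by (simp add: right_diff_distrib)
  then have "(1 - th) * p + th * q = u" by (simp add: left_diff_distrib)
  then have "(u, c) = (1 - th) *\<^sub>R (p, c) + th *\<^sub>R (q, c)" by (simp add: algebra_simps)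
  then show ?thesis using convexD_alt[OF assms(1) assms(2) assms(3) th] by simp
qed

lemma lf_rect: "s > 0 \<Longrightarrow> Inf (fst ` rect a b s s) = a"
proof -
  assume "s > 0"
  then have "fst ` rect a b s s = {a..a+s}" unfolding rect_def by (simp add: fst_image_times)
  then show ?thesis using \<open>s > 0\<close> by simp
qed



theorem lemma4p12:
  fixes vs :: "(int \<times> int) list" and P :: "(real \<times> real) set"
    and x y d :: real and e1 e2 Y :: "(real \<times> real) set"
    and RR :: "(real \<times> real) set set"
  assumes poly: "ortho_polygon vs" and P_def: "P = polygon_region vs"
    and d_pos: "d > 0"
    and S_max: "maximal_square P (rect x y d d)"
    and e1: "e1 \<in> poly_edges vs" "horizontal e1"
    and e2: "e2 \<in> poly_edges vs" "horizontal e2"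
    and top_ov: "infinite (top_side x y d d \<inter> e1)"
    and bot_ov: "infinite (bottom_side x y d d \<inter> e2)"
    and tr: "(x + d, y + d) \<in> e1"
    and br: "(x + d, y) \<in> e2"
    and Ystrip: "strip vs Y"
    and Ybetween: "\<exists>xY yY w h. Y = rect xY yY w h \<and> w > h \<and>
                     top_side xY yY w h \<subseteq> e1 \<and> bottom_side xY yY w h \<subseteq> e2 \<and>
                     (xY + w) - (x + d) > d"
    and RR_ps: "partial_solution P RR"
    and S_in: "rect x y d d \<in> RR"
    and no_ov: "\<forall>R\<in>RR. \<not> overlaps R (rect (x + d) y d d)"
  shows "partial_solution P (insert (rect (x + d) y d d) RR)"
proof -
  define S where "S = rect x y d d"
  define S' where "S' = rect (x + d) y d d"
  define C where "C = path_image (boundary_path vs)"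
  have PC: "P = C \<union> inside C" unfolding P_def C_def polygon_region_def by simp
  have SP: "S \<subseteq> P" using S_max unfolding S_def maximal_square_def valid_square_def by auto
  obtain xY yY w h where Y: "Y = rect xY yY w h" "w > h" "top_side xY yY w h \<subseteq> e1"
      "bottom_side xY yY w h \<subseteq> e2" "(xY + w) - (x + d) > d"
    using Ybetween by blast
  have YP: "Y \<subseteq> P" using Ystrip unfolding strip_def strip_cand_def P_def by auto
  obtain x1 y1 w1 h1 where Y1: "w1 > 0" "h1 > 0" "Y = rect x1 y1 w1 h1"
    using Ystrip unfolding strip_def strip_cand_def by blast
  have "x1 = xY \<and> y1 = yY \<and> w1 = w \<and> h1 = h" using rect_eq[of x1 y1 w1 h1 xY yY w h] Y1 Y(1) by auto
  then have wpos: "w > 0" and hpos: "h > 0" using Y1 by auto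
  obtain c1 where c1: "\<forall>p\<in>e1. snd p = c1" using e1(2) unfolding horizontal_def by blast
  obtain c2 where c2: "\<forall>p\<in>e2. snd p = c2" using e2(2) unfolding horizontal_def by blast
  have c1v: "c1 = y + d" using c1 tr by force
  have c2v: "c2 = y" using c2 br by force
  have "(xY, yY + h) \<in> e1" "(xY + w, yY + h) \<in> e1" using Y(3) wpos unfolding top_side_def by auto
  then have yh: "yY + h = y + d" using c1 c1v by force
  have "(xY, yY) \<in> e2" "(xY + w, yY) \<in> e2" using Y(4) wpos unfolding bottom_side_def by auto
  then have yY: "yY = y" using c2 c2v by force
  have hd: "h = d" using yh yY by simp
  have e1pts: "(xY, y + d) \<in> e1" "(xY + w, y + d) \<in> e1" using Y(3) wpos yh unfolding top_side_def by auto
  have e2pts: "(xY, y) \<in> e2" "(xY + w, y) \<in> e2" using Y(4) wpos yY unfolding bottom_side_def by auto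
  have cvx1: "convex e1" using e1(1) unfolding poly_edges_def by auto
  have cvx2: "convex e2" using e2(1) unfolding poly_edges_def by auto
  have e1C: "e1 \<subseteq> C" using edge_sub_path[OF e1(1)] unfolding C_def .
  have e2C: "e2 \<subseteq> C" using edge_sub_path[OF e2(1)] unfolding C_def .
  have on_e1: "(u, y + d) \<in> e1" if "x + d \<le> u" "u \<le> xY + w" for u
    using seg_horiz[OF cvx1 tr e1pts(2)] that by simp
  have on_e2: "(u, y) \<in> e2" if "x + d \<le> u" "u \<le> xY + w" for u
    using seg_horiz[OF cvx2 br e2pts(2)] that by simp
  have Yr: "Y = rect xY y w d" using Y(1) yY hd by simp

  have S'P: "S' \<subseteq> P"
  proof (cases "xY \<le> x + d")
    case True
    have "S' \<subseteq> Y" unfolding S'_def Yr rect_def using True Y(5) by auto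
    then show ?thesis using YP by auto
  next
    case False
    define K where "K = rect (x + d) y (xY - (x + d)) d"
    have bdry: "q \<in> P" if "q \<in> K" "q \<notin> {x + d<..<xY} \<times> {y<..<y + d}" for q
    proof -
      obtain u v where q: "q = (u, v)" by force
      have uv: "x + d \<le> u" "u \<le> xY" "y \<le> v" "v \<le> y + d" using that(1) q unfolding K_def rect_def by auto
      have "u = x + d \<or> u = xY \<or> v = y \<or> v = y + d" using that(2) uv q by auto
      then show ?thesis
      proof (elim disjE)
        assume "u = x + d" then have "q \<in> S" using uv q d_pos unfolding S_def rect_def by auto
        then show ?thesis using SP by auto
      next
        assume "u = xY" then have "q \<in> Y" using uv q wpos unfolding Yr rect_def by auto
        then show ?thesis using YP by auto
      next
        assume "v = y" then have "q \<in> e2" using on_e2[of u] uv q wpos by auto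
        then show ?thesis using e2C PC by auto
      next
        assume "v = y + d" then have "q \<in> e1" using on_e1[of u] uv q wpos by auto
        then show ?thesis using e1C PC by auto
      qed
    qed
    have intK: "interior K = {x + d<..<xY} \<times> {y<..<y + d}" unfolding K_def interior_rect by simp
    have clK: "closed K" unfolding K_def rect_def by (simp add: closed_Times)
    have bK: "bounded K" unfolding K_def rect_def by (simp add: bounded_Times)
    have KP: "K \<subseteq> P"
    proof
      fix q assume qK: "q \<in> K"
      show "q \<in> P"
      proof (rule ccontr)
        assume qP: "q \<notin> P"
        have "q \<notin> C" "q \<notin> inside C" using qP PC by auto
        then have qout: "q \<in> outside C" using union_with_outside[of C] by blast
        define Cm where "Cm = connected_component_set (- C) q"
        have Cmout: "Cm \<subseteq> outside C" unfolding Cm_def using qout outside_same_component by blast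
        have CmP: "Cm \<inter> P = {}" using Cmout PC inside_Int_outside outside_no_overlap by blast
        have Cmc: "connected Cm" unfolding Cm_def by simp
        have qCm: "q \<in> Cm" unfolding Cm_def using \<open>q \<notin> C\<close> by simp
        have "Cm \<subseteq> K"
        proof (rule ccontr)
          assume "\<not> Cm \<subseteq> K"
          then have "Cm - K \<noteq> {}" by auto
          moreover have "Cm \<inter> K \<noteq> {}" using qCm qK by auto
          ultimately obtain f where f: "f \<in> Cm" "f \<in> frontier K"
            using connected_Int_frontier[OF Cmc] by blast
          have "f \<in> K" using f(2) clK frontier_subset_closed by blast
          moreover have "f \<notin> interior K" using f(2) frontier_def by auto
          ultimately have "f \<in> P" using bdry intK by auto
          then show False using f(1) CmP by auto
        qed
        then have "bounded Cm" using bK bounded_subset by blast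
        then show False using qout unfolding outside_def Cm_def by simp
      qed
    qed
    have "S' \<subseteq> K \<union> Y" unfolding S'_def K_def Yr rect_def using Y(5) by auto
    then show ?thesis using KP YP by auto
  qed
  obtain RR' where RR': "minimum_covering P RR'" "RR \<subseteq> RR'"
    using RR_ps unfolding partial_solution_def by blast
  define U where "U = (\<Union>R\<in>RR'. ext R)"
  have rp: "\<forall>R\<in>RR'. rec_pack P R" and mU: "min_square_cover P U"
    and disj: "\<forall>R1\<in>RR'. \<forall>R2\<in>RR'. R1 \<noteq> R2 \<longrightarrow> ext R1 \<inter> ext R2 = {}"
    using RR'(1) unfolding minimum_covering_def U_def by auto
  have finU: "finite U" and vU: "\<forall>Q\<in>U. valid_square P Q" and unU: "\<Union>U = P"
    using mU unfolding min_square_cover_def square_cover_def by auto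
  have minU: "\<And>V. square_cover P V \<Longrightarrow> card U \<le> card V"
    using mU unfolding min_square_cover_def by auto
  have SU: "S \<in> U" unfolding U_def using S_in RR'(2) ext_square[OF d_pos, of x y] S_def by blast
  define A where "A = {a \<in> (\<lambda>Q. Inf (fst ` Q)) ` U. a > x + d}"
  have finA: "finite A" unfolding A_def using finU by simp
  define m where "m = Min (insert (x + 2 * d) A)"
  have m1: "m \<le> x + 2 * d" unfolding m_def using finA by simp
  have m2: "m > x + d" unfolding m_def using finA d_pos A_def by auto
  have mA: "\<And>a. a \<in> A \<Longrightarrow> m \<le> a" unfolding m_def using finA by simp
  define t0 where "t0 = (x + d + m) / 2"
  have "(t0, y + d / 2) \<in> S'" unfolding S'_def rect_def t0_def using m1 m2 d_pos by auto
  then have "(t0, y + d / 2) \<in> \<Union>U" using S'P unU by auto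
  then obtain Q where QU: "Q \<in> U" and ptQ: "(t0, y + d / 2) \<in> Q" by blast
  have "is_square Q" using vU QU unfolding valid_square_def by auto
  then obtain a b s where s: "s > 0" and Qr: "Q = rect a b s s"
    unfolding is_square_def by blast
  have QP: "Q \<subseteq> P" using vU QU unfolding valid_square_def by auto
  have pt: "a \<le> t0" "t0 \<le> a + s" "b \<le> y + d / 2" "y + d / 2 \<le> b + s"
    using ptQ unfolding Qr rect_def by auto
  have "Inf (fst ` Q) = a" using lf_rect[OF s] Qr by simp
  have a1: "a \<le> x + d"
  proof (rule ccontr)
    assume "\<not> a \<le> x + d"
    then have "a \<in> A" unfolding A_def using QU \<open>Inf (fst ` Q) = a\<close> by force
    then have "m \<le> a" by (rule mA)
    then show False using pt(1) m2 unfolding t0_def by simp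
  qed
  have a2: "a + s > x + d" using pt(2) m2 unfolding t0_def by simp
  have intQP: "interior Q \<subseteq> interior P" using QP by (rule interior_mono)
  define u where "u = (max a (x + d) + min (a + s) (x + 2 * d)) / 2"
  have u: "a < u" "u < a + s" "x + d < u" "u < x + 2 * d" using a1 a2 d_pos s unfolding u_def by auto
  have uw: "u \<le> xY + w" using u Y(5) by simp
  have b1: "b + s \<le> y + d"
  proof (rule ccontr)
    assume "\<not> b + s \<le> y + d"
    then have "(u, y + d) \<in> interior Q" unfolding Qr interior_rect using u pt d_pos by auto
    moreover have "(u, y + d) \<in> C" using on_e1[of u] u uw e1C by auto
    ultimately show False using path_not_interior[OF poly, of "(u, y + d)"] intQP
      unfolding C_def P_def by auto
  qed
  have b2: "y \<le> b"
  proof (rule ccontr)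
    assume "\<not> y \<le> b"
    then have "(u, y) \<in> interior Q" unfolding Qr interior_rect using u pt d_pos by auto
    moreover have "(u, y) \<in> C" using on_e2[of u] u uw e2C by auto
    ultimately show False using path_not_interior[OF poly, of "(u, y)"] intQP
      unfolding C_def P_def by auto
  qed
  have sd: "s \<le> d" using b1 b2 by simp
  have QSS: "Q \<subseteq> S \<union> S'"
  proof
    fix p assume "p \<in> Q"
    then obtain pu pv where p: "p = (pu, pv)" "a \<le> pu" "pu \<le> a + s" "b \<le> pv" "pv \<le> b + s"
      unfolding Qr rect_def by auto
    show "p \<in> S \<union> S'"
    proof (cases "pu \<le> x + d")
      case True then show ?thesis using p a2 sd b1 b2 unfolding S_def rect_def by auto
    next
      case False then show ?thesis using p a1 sd b1 b2 unfolding S'_def rect_def by auto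
    qed
  qed
  have QneS: "Q \<noteq> S"
  proof
    assume "Q = S"
    moreover have "(a + s, b) \<in> Q" unfolding Qr rect_def using s by auto
    ultimately show False using a2 unfolding S_def rect_def by auto
  qed
  have ovQ: "interior Q \<inter> interior S' \<noteq> {}"
  proof -
    have "((x + d + (a + s)) / 2, b + s / 2) \<in> interior Q \<inter> interior S'"
      unfolding Qr S'_def interior_rect using a1 a2 s sd b1 b2 by auto
    then show ?thesis by blast
  qed
  obtain R0 where R0: "R0 \<in> RR'" "Q \<in> ext R0" using QU unfolding U_def by blast
  have "interior Q \<subseteq> interior R0" using ext_sub[OF R0(2)] by (rule interior_mono)
  then have "overlaps R0 S'" using ovQ unfolding overlaps_def by auto
  then have R0RR: "R0 \<notin> RR" using no_ov unfolding S'_def by auto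
  have sqext: "\<And>Q' R. Q' \<in> ext R \<Longrightarrow> ext Q' = {Q'}"
    using ext_is_square ext_square by blast
  have S'sq: "ext S' = {S'}" unfolding S'_def using ext_square[OF d_pos] .
  define U' where "U' = insert S' (U - {Q})"
  have S'valid: "valid_square P S'" unfolding valid_square_def is_square_def S'_def
    using S'P d_pos S'_def by blast
  have covU': "square_cover P U'"
    unfolding square_cover_def
  proof (intro conjI)
    show "finite U'" unfolding U'_def using finU by simp
    show "\<forall>Q\<in>U'. valid_square P Q" unfolding U'_def using vU S'valid by auto
    show "\<Union>U' = P"
    proof
      show "\<Union>U' \<subseteq> P" unfolding U'_def using vU S'P unfolding valid_square_def by auto
      show "P \<subseteq> \<Union>U'"
      proof
        fix p assume "p \<in> P"
        then obtain Q' where "Q' \<in> U" "p \<in> Q'" using unU by auto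
        then show "p \<in> \<Union>U'"
        proof (cases "Q' = Q")
          case True
          then have "p \<in> S \<union> S'" using QSS \<open>p \<in> Q'\<close> by auto
          then show ?thesis unfolding U'_def using SU QneS by auto
        next
          case False then show ?thesis unfolding U'_def using \<open>Q' \<in> U\<close> \<open>p \<in> Q'\<close> by auto
        qed
      qed
    qed
  qed
  have cardU': "card U' \<le> card U"
  proof -
    have "card U' \<le> Suc (card (U - {Q}))" unfolding U'_def by (rule card_insert_le_m1) auto
    also have "Suc (card (U - {Q})) = card U" using finU QU
      by (metis card_Suc_Diff1)
    finally show ?thesis .
  qed
  have S'notin: "S' \<notin> U - {Q}"
  proof
    assume "S' \<in> U - {Q}"
    then have "U' = U - {Q}" unfolding U'_def by auto
    then have "card U' < card U" using card_Diff1_less[OF finU QU] by metis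
    then show False using minU[OF covU'] by simp
  qed
  have minU': "min_square_cover P U'"
    unfolding min_square_cover_def using covU' cardU' minU by fastforce
  define RR2 where "RR2 = (RR' - {R0}) \<union> (ext R0 - {Q}) \<union> {S'}"
  have QnotR: "\<And>R. R \<in> RR' \<Longrightarrow> R \<noteq> R0 \<Longrightarrow> Q \<notin> ext R"
    using disj R0 by blast
  have unRR2: "(\<Union>R\<in>RR2. ext R) = U'"
  proof -
    have "(\<Union>R\<in>RR2. ext R) = (\<Union>R\<in>RR' - {R0}. ext R) \<union> (\<Union>Q'\<in>ext R0 - {Q}. ext Q') \<union> ext S'"
      unfolding RR2_def by blast
    also have "(\<Union>Q'\<in>ext R0 - {Q}. ext Q') = ext R0 - {Q}" using sqext by auto
    also have "(\<Union>R\<in>RR' - {R0}. ext R) \<union> (ext R0 - {Q}) = U - {Q}"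
      unfolding U_def using R0 QnotR by blast
    finally show ?thesis unfolding U'_def S'sq by auto
  qed
  have extU: "\<And>R. R \<in> RR' \<Longrightarrow> R \<noteq> R0 \<Longrightarrow> ext R \<subseteq> U - {Q}"
    unfolding U_def using QnotR by blast
  have ext0U: "ext R0 - {Q} \<subseteq> U - {Q}" unfolding U_def using R0 by blast
  have mc: "minimum_covering P RR2"
    unfolding minimum_covering_def
  proof (intro conjI)
    show "\<forall>R\<in>RR2. rec_pack P R"
    proof
      fix R assume "R \<in> RR2"
      then consider "R \<in> RR'" | "R \<in> ext R0" | "R = S'" unfolding RR2_def by blast
      then show "rec_pack P R"
      proof cases
        case 1 then show ?thesis using rp by auto
      next
        case 2
        then obtain a' b' t' where "t' > 0" "R = rect a' b' t' t'" using ext_is_square by blast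
        moreover have "R \<subseteq> P" using 2 ext_sub R0 rp unfolding rec_pack_def by blast
        ultimately show ?thesis using square_rec_pack by blast
      next
        case 3 then show ?thesis using square_rec_pack[OF d_pos] S'P unfolding S'_def by blast
      qed
    qed
    show "min_square_cover P (\<Union>R\<in>RR2. ext R)" using unRR2 minU' by simp
    show "\<forall>R1\<in>RR2. \<forall>R2\<in>RR2. R1 \<noteq> R2 \<longrightarrow> ext R1 \<inter> ext R2 = {}"
    proof (intro ballI impI)
      fix R1 R2 assume r1: "R1 \<in> RR2" and r2: "R2 \<in> RR2" and ne: "R1 \<noteq> R2"
      have key: "ext R1 \<inter> ext R2 = {}" if r1: "R1 \<in> RR2" and r2: "R2 \<in> RR2" and ne: "R1 \<noteq> R2"
        and c: "R1 \<in> RR' - {R0}" for R1 R2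
      proof -
        consider "R2 \<in> RR' - {R0}" | "R2 \<in> ext R0 - {Q}" | "R2 = S'" using r2 unfolding RR2_def by blast
        then show ?thesis
        proof cases
          case 1 then show ?thesis using disj c ne by auto
        next
          case 2
          then have "ext R2 = {R2}" using sqext by blast
          moreover have "R2 \<notin> ext R1" using disj c R0(1) 2 by blast
          ultimately show ?thesis by auto
        next
          case 3
          then show ?thesis using S'sq S'notin extU c by auto
        qed
      qed
      have key2: "ext R1 \<inter> ext R2 = {}" if r1: "R1 \<in> RR2" and r2: "R2 \<in> RR2" and ne: "R1 \<noteq> R2"
        and c: "R1 \<notin> RR' - {R0}" "R2 \<notin> RR' - {R0}" for R1 R2
      proof -
        have "R1 \<in> ext R0 - {Q} \<or> R1 = S'" "R2 \<in> ext R0 - {Q} \<or> R2 = S'"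
          using r1 r2 c unfolding RR2_def by auto
        moreover have "ext R1 = {R1}" "ext R2 = {R2}"
          using calculation sqext S'sq by blast+
        ultimately show ?thesis using ne by auto
      qed
      show "ext R1 \<inter> ext R2 = {}"
      proof (cases "R1 \<in> RR' - {R0}")
        case True then show ?thesis using key r1 r2 ne by blast
      next
        case False
        show ?thesis
        proof (cases "R2 \<in> RR' - {R0}")
          case True then show ?thesis using key[OF r2 r1 ne[symmetric]] by blast
        next
          case False2: False
          then show ?thesis using key2 r1 r2 ne False by blast
        qed
      qed
    qed
  qed
  have "insert S' RR \<subseteq> RR2" unfolding RR2_def using RR'(2) R0RR by auto
  then show ?thesis unfolding partial_solution_def S'_def[symmetric] using mc by blast
qed

end
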